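(* Let $O_{(4,1)}(x,y,z,w)=x^4z^2w^2+y^4x^2w^2+z^4x^2y^2+w^4y^2z^2-4x^2y^2z^2w^2$, and let $F$ be a real form of degree $8$ in $x,y,z,w$ with $0\le F\le O_{(4,1)}$ pointwise on $\mathbb R^4$. Let $H$ be the part of $F$ consisting of its terms in the monomials $x^4z^2w^2$, $y^4x^2w^2$, $z^4x^2y^2$, $w^4y^2z^2$, $x^2y^2z^2w^2$, i.e. $H=a\,x^4z^2w^2+b\,y^4x^2w^2+c\,z^4x^2y^2+d\,w^4y^2z^2+e\,x^2y^2z^2w^2$ where $a,b,c,d,e$ are the corresponding coefficients of $F$. Then $H=a\,O_{(4,1)}$, with $0\le a\le1$. *)

theory Defs
  imports Complex_Main
begin

definition exps :: "nat \<Rightarrow> (nat \<times> nat \<times> nat \<times> nat) set" where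
  "exps d = {(i,j,k,l). i + j + k + l = d}"

text \<open>A real form of degree d in x,y,z,w, given by its coefficient function
  (only coefficients of exponent tuples in exps d are used).\<close>
definition form_eval :: "nat \<Rightarrow> (nat \<times> nat \<times> nat \<times> nat \<Rightarrow> real) \<Rightarrow> real \<Rightarrow> real \<Rightarrow> real \<Rightarrow> real \<Rightarrow> real" where
  "form_eval d c x y z w = (\<Sum>(i,j,k,l)\<in>exps d. c (i,j,k,l) * x^i * y^j * z^k * w^l)"

definition O41 :: "real \<Rightarrow> real \<Rightarrow> real \<Rightarrow> real \<Rightarrow> real" where
  "O41 x y z w = x^4*z^2*w^2 + y^4*x^2*w^2 + z^4*x^2*y^2 + w^4*y^2*z^2 - 4*x^2*y^2*z^2*w^2"

end

theory Submission
  imports Defs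
begin

lemma exps4: "exps 4 = {(4,0,0,0),(0,4,0,0),(0,0,4,0),(0,0,0,4),
 (3,1,0,0),(3,0,1,0),(3,0,0,1),(1,3,0,0),(0,3,1,0),(0,3,0,1),(1,0,3,0),(0,1,3,0),(0,0,3,1),(1,0,0,3),(0,1,0,3),(0,0,1,3),
 (2,2,0,0),(2,0,2,0),(2,0,0,2),(0,2,2,0),(0,2,0,2),(0,0,2,2),
 (2,1,1,0),(1,2,1,0),(1,1,2,0),(0,2,1,1),(0,1,2,1),(0,1,1,2),(2,0,1,1),(1,0,2,1),(1,0,1,2),(2,1,0,1),(1,2,0,1),(1,1,0,2),
 (1,1,1,1)}" (is "_ = ?R")
proof
  show "?R \<subseteq> exps 4" by (auto simp: exps_def)
  show "exps 4 \<subseteq> ?R"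
  proof
    fix v assume "v \<in> exps 4"
    then obtain i j k l where v: "v = (i,j,k,l)" and s: "i+j+k+l = 4" by (auto simp: exps_def)
    have l: "l = 4 - i - j - k" using s by arith
    have "i=0 \<or> i=1 \<or> i=2 \<or> i=3 \<or> i=4" "j=0 \<or> j=1 \<or> j=2 \<or> j=3 \<or> j=4" "k=0 \<or> k=1 \<or> k=2 \<or> k=3 \<or> k=4" using s by arith+
    then show "v \<in> ?R" using s unfolding v l by (elim disjE; simp)
  qed
qed

definition Gf :: "(nat \<times> nat \<times> nat \<times> nat \<Rightarrow> real) \<Rightarrow> real \<Rightarrow> real \<Rightarrow> real \<Rightarrow> real \<Rightarrow> real" where
  "Gf c X Y Z W = (\<Sum>(i,j,k,l)\<in>exps 4. c (2*i,2*j,2*k,2*l) * X^i*Y^j*Z^k*W^l)"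

definition sg :: "nat \<Rightarrow> real" where "sg i = (-1)^i + 1"

lemma sgsum: "(\<Sum>s\<in>{-1,1::real}. \<Sum>v\<in>A. f v * s^(p v)) = (\<Sum>v\<in>A. f v * sg (p v))"
  by (simp add: sum.distrib[symmetric] sg_def algebra_simps)

lemma step1:
  "(\<Sum>s1\<in>{-1,1::real}. \<Sum>s2\<in>{-1,1::real}. \<Sum>s3\<in>{-1,1::real}. \<Sum>s4\<in>{-1,1::real}.
      form_eval 8 c (s1*x) (s2*y) (s3*z) (s4*w))
   = (\<Sum>(i,j,k,l)\<in>exps 8. c (i,j,k,l) * x^i*y^j*z^k*w^l * (sg i * sg j * sg k * sg l))"
proof -
  define T where "T = (\<lambda>(i,j,k,l). c (i,j,k,l) * x^i*y^j*z^k*w^l)"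
  define p1 where "p1 = (\<lambda>(i::nat,j::nat,k::nat,l::nat). i)"
  define p2 where "p2 = (\<lambda>(i::nat,j::nat,k::nat,l::nat). j)"
  define p3 where "p3 = (\<lambda>(i::nat,j::nat,k::nat,l::nat). k)"
  define p4 where "p4 = (\<lambda>(i::nat,j::nat,k::nat,l::nat). l)"
  have fe: "form_eval 8 c (s1*x) (s2*y) (s3*z) (s4*w) =
     (\<Sum>v\<in>exps 8. (((T v * s1^(p1 v)) * s2^(p2 v)) * s3^(p3 v)) * s4^(p4 v))" for s1 s2 s3 s4
    unfolding form_eval_def T_def p1_def p2_def p3_def p4_def
    by (rule sum.cong) (auto simp: power_mult_distrib mult_ac)
  have "(\<Sum>s1\<in>{-1,1::real}. \<Sum>s2\<in>{-1,1::real}. \<Sum>s3\<in>{-1,1::real}. \<Sum>s4\<in>{-1,1::real}.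
      form_eval 8 c (s1*x) (s2*y) (s3*z) (s4*w))
    = (\<Sum>s1\<in>{-1,1::real}. \<Sum>s2\<in>{-1,1::real}. \<Sum>s3\<in>{-1,1::real}.
         \<Sum>v\<in>exps 8. ((T v * s1^(p1 v)) * s2^(p2 v)) * s3^(p3 v) * sg (p4 v))"
    by (simp only: fe sgsum)
  also have "\<dots> = (\<Sum>s1\<in>{-1,1::real}. \<Sum>s2\<in>{-1,1::real}. \<Sum>s3\<in>{-1,1::real}.
         \<Sum>v\<in>exps 8. ((T v * s1^(p1 v)) * s2^(p2 v) * sg (p4 v)) * s3^(p3 v))"
    by (simp only: mult_ac)
  also have "\<dots> = (\<Sum>s1\<in>{-1,1::real}. \<Sum>s2\<in>{-1,1::real}.
         \<Sum>v\<in>exps 8. ((T v * s1^(p1 v)) * s2^(p2 v) * sg (p4 v)) * sg (p3 v))"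
    by (simp only: sgsum)
  also have "\<dots> = (\<Sum>s1\<in>{-1,1::real}. \<Sum>s2\<in>{-1,1::real}.
         \<Sum>v\<in>exps 8. ((T v * s1^(p1 v)) * sg (p3 v) * sg (p4 v)) * s2^(p2 v))"
    by (simp only: mult_ac)
  also have "\<dots> = (\<Sum>s1\<in>{-1,1::real}.
         \<Sum>v\<in>exps 8. ((T v * s1^(p1 v)) * sg (p3 v) * sg (p4 v)) * sg (p2 v))"
    by (simp only: sgsum)
  also have "\<dots> = (\<Sum>s1\<in>{-1,1::real}.
         \<Sum>v\<in>exps 8. (T v * sg (p2 v) * sg (p3 v) * sg (p4 v)) * s1^(p1 v))"
    by (simp only: mult_ac)
  also have "\<dots> = (\<Sum>v\<in>exps 8. (T v * sg (p2 v) * sg (p3 v) * sg (p4 v)) * sg (p1 v))"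
    by (simp only: sgsum)
  also have "\<dots> = (\<Sum>(i,j,k,l)\<in>exps 8. c (i,j,k,l) * x^i*y^j*z^k*w^l * (sg i * sg j * sg k * sg l))"
    by (rule sum.cong) (auto simp: T_def p1_def p2_def p3_def p4_def mult_ac)
  finally show ?thesis .
qed

lemma finite_exps: "finite (exps d)"
proof -
  have "exps d \<subseteq> {..d} \<times> {..d} \<times> {..d} \<times> {..d}" by (auto simp: exps_def)
  then show ?thesis by (rule finite_subset) auto
qed

lemma step2:
  "(\<Sum>(i,j,k,l)\<in>exps 8. c (i,j,k,l) * x^i*y^j*z^k*w^l * (sg i * sg j * sg k * sg l))
   = 16 * Gf c (x^2) (y^2) (z^2) (w^2)"
proof -
  define dbl where "dbl = (\<lambda>(i::nat,j::nat,k::nat,l::nat). (2*i,2*j,2*k,2*l))"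
  have inj: "inj_on dbl (exps 4)" by (auto simp: inj_on_def dbl_def)
  have sub: "dbl ` exps 4 \<subseteq> exps 8" by (auto simp: dbl_def exps_def)
  have "(\<Sum>(i,j,k,l)\<in>exps 8. c (i,j,k,l) * x^i*y^j*z^k*w^l * (sg i * sg j * sg k * sg l))
     = (\<Sum>(i,j,k,l)\<in>dbl ` exps 4. c (i,j,k,l) * x^i*y^j*z^k*w^l * (sg i * sg j * sg k * sg l))"
  proof (rule sum.mono_neutral_right[OF finite_exps sub])
    show "\<forall>v\<in>exps 8 - dbl ` exps 4. (case v of (i,j,k,l) \<Rightarrow> c (i,j,k,l) * x^i*y^j*z^k*w^l * (sg i * sg j * sg k * sg l)) = 0"
    proof
      fix v assume v: "v \<in> exps 8 - dbl ` exps 4"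
      obtain i j k l where vv: "v = (i,j,k,l)" by (cases v) auto
      have "\<not> (even i \<and> even j \<and> even k \<and> even l)"
      proof
        assume "even i \<and> even j \<and> even k \<and> even l"
        then obtain a b e f where "i = 2*a" "j=2*b" "k=2*e" "l=2*f" by (auto elim!: evenE)
        moreover have "i+j+k+l = 8" using v vv by (auto simp: exps_def)
        ultimately have "(a,b,e,f) \<in> exps 4" "v = dbl (a,b,e,f)" by (auto simp: exps_def dbl_def vv)
        then show False using v by auto
      qed
      then have "sg i * sg j * sg k * sg l = 0" by (auto simp: sg_def)
      then show "(case v of (i,j,k,l) \<Rightarrow> c (i,j,k,l) * x^i*y^j*z^k*w^l * (sg i * sg j * sg k * sg l)) = 0"
        by (simp add: vv)
    qed
  qed
  also have "\<dots> = (\<Sum>(i,j,k,l)\<in>exps 4. c (2*i,2*j,2*k,2*l) * x^(2*i)*y^(2*j)*z^(2*k)*w^(2*l) * 16)"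
    by (subst sum.reindex[OF inj]) (auto simp: dbl_def sg_def intro!: sum.cong)
  also have "\<dots> = 16 * Gf c (x^2) (y^2) (z^2) (w^2)"
    by (auto simp: Gf_def sum_distrib_left power_mult intro!: sum.cong)
  finally show ?thesis .
qed


definition Op :: "real \<Rightarrow> real \<Rightarrow> real \<Rightarrow> real \<Rightarrow> real" where
  "Op X Y Z W = X^2*Z*W + Y^2*X*W + Z^2*X*Y + W^2*Y*Z - 4*X*Y*Z*W"

lemma Gf_exp: "Gf c X Y Z W =
      c (0,0,0,8) * W^4
    + c (0,0,2,6) * Z*W^3
    + c (0,0,4,4) * Z^2*W^2
    + c (0,0,6,2) * Z^3*W
    + c (0,0,8,0) * Z^4
    + c (0,2,0,6) * Y*W^3
    + c (0,2,2,4) * Y*Z*W^2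
    + c (0,2,4,2) * Y*Z^2*W
    + c (0,2,6,0) * Y*Z^3
    + c (0,4,0,4) * Y^2*W^2
    + c (0,4,2,2) * Y^2*Z*W
    + c (0,4,4,0) * Y^2*Z^2
    + c (0,6,0,2) * Y^3*W
    + c (0,6,2,0) * Y^3*Z
    + c (0,8,0,0) * Y^4
    + c (2,0,0,6) * X*W^3
    + c (2,0,2,4) * X*Z*W^2
    + c (2,0,4,2) * X*Z^2*W
    + c (2,0,6,0) * X*Z^3
    + c (2,2,0,4) * X*Y*W^2
    + c (2,2,2,2) * X*Y*Z*W
    + c (2,2,4,0) * X*Y*Z^2
    + c (2,4,0,2) * X*Y^2*W
    + c (2,4,2,0) * X*Y^2*Z
    + c (2,6,0,0) * X*Y^3
    + c (4,0,0,4) * X^2*W^2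
    + c (4,0,2,2) * X^2*Z*W
    + c (4,0,4,0) * X^2*Z^2
    + c (4,2,0,2) * X^2*Y*W
    + c (4,2,2,0) * X^2*Y*Z
    + c (4,4,0,0) * X^2*Y^2
    + c (6,0,0,2) * X^3*W
    + c (6,0,2,0) * X^3*Z
    + c (6,2,0,0) * X^3*Y
    + c (8,0,0,0) * X^4"
  by (simp add: Gf_def exps4)

lemma Gbounds:
  assumes F0: "\<And>x y z w. 0 \<le> form_eval 8 c x y z w"
      and F1: "\<And>x y z w. form_eval 8 c x y z w \<le> O41 x y z w"
      and X: "X \<ge> 0" and Y: "Y \<ge> 0" and Z: "Z \<ge> 0" and W: "W \<ge> 0"
  shows "0 \<le> Gf c X Y Z W \<and> Gf c X Y Z W \<le> Op X Y Z W"
proof -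
  define x where "x = sqrt X"
  define y where "y = sqrt Y"
  define z where "z = sqrt Z"
  define w where "w = sqrt W"
  have sq: "X = x^2" "Y = y^2" "Z = z^2" "W = w^2"
    using X Y Z W by (auto simp: x_def y_def z_def w_def)
  define S where "S = (\<Sum>s1\<in>{-1,1::real}. \<Sum>s2\<in>{-1,1::real}. \<Sum>s3\<in>{-1,1::real}. \<Sum>s4\<in>{-1,1::real}.
      form_eval 8 c (s1*x) (s2*y) (s3*z) (s4*w))"
  have SG: "S = 16 * Gf c X Y Z W" unfolding S_def step1 step2 sq ..
  have "0 \<le> S" unfolding S_def by (intro sum_nonneg F0)
  moreover have "S \<le> 16 * O41 x y z w"
  proof -
    have "S \<le> (\<Sum>s1\<in>{-1,1::real}. \<Sum>s2\<in>{-1,1::real}. \<Sum>s3\<in>{-1,1::real}. \<Sum>s4\<in>{-1,1::real}.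
      O41 (s1*x) (s2*y) (s3*z) (s4*w))" unfolding S_def by (intro sum_mono F1)
    also have "\<dots> = 16 * O41 x y z w" by (simp add: O41_def)
    finally show ?thesis .
  qed
  moreover have "O41 x y z w = Op X Y Z W"
    unfolding sq O41_def Op_def by (simp add: power_mult[symmetric] mult.commute)
  ultimately show ?thesis using SG by simp
qed

lemma L1:
  fixes A B :: real
  assumes h: "\<And>e. 0 < e \<Longrightarrow> e < 1 \<Longrightarrow> 0 \<le> e*A + e^2*B"
  shows "0 \<le> A"
proof (rule ccontr)
  assume "\<not> 0 \<le> A"
  then have A: "A < 0" by simp
  define e where "e = min (1/2) (-A / (2*(\<bar>B\<bar>+1)))"
  have "0 < -A / (2*(\<bar>B\<bar>+1))" using A by (intro divide_pos_pos) auto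
  then have e0: "0 < e" "e < 1" by (auto simp: e_def)
  have "e \<le> -A / (2*(\<bar>B\<bar>+1))" by (simp add: e_def)
  moreover have D: "0 < 2*(\<bar>B\<bar>+1)" by simp
  ultimately have "e * (2*(\<bar>B\<bar>+1)) \<le> (-A / (2*(\<bar>B\<bar>+1))) * (2*(\<bar>B\<bar>+1))"
    by (intro mult_right_mono) auto
  then have "e * (2*(\<bar>B\<bar>+1)) \<le> -A" using D by simp
  moreover have "e*B \<le> e*\<bar>B\<bar>" using e0 by (intro mult_left_mono) auto
  moreover have "e*\<bar>B\<bar> < e*(2*(\<bar>B\<bar>+1))" using e0 by simp
  ultimately have "A + e * B < 0" by linarith
  then have "e*(A + e*B) < 0" using e0 by (simp add: mult_pos_neg)
  moreover have "0 \<le> e*(A + e*B)" using h[OF e0] by (simp add: power2_eq_square algebra_simps)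
  ultimately show False by linarith
qed

lemma quart2:
  fixes a b c d e :: real
  assumes "\<forall>X Y. X\<ge>0 \<longrightarrow> Y\<ge>0 \<longrightarrow> f X Y = 0"
      and "\<forall>X Y. f X Y = a*X^4 + b*X^3*Y + c*X^2*Y^2 + d*X*Y^3 + e*Y^4"
  shows "a=0 \<and> b=0 \<and> c=0 \<and> d=0 \<and> e=0"
proof -
  have "f 1 0 = 0" "f 0 1 = 0" "f 1 1 = 0" "f 1 2 = 0" "f 2 1 = 0" using assms(1) by auto
  then show ?thesis unfolding assms(2)[rule_format] by simp
qed

lemma tri:
  fixes pa pb pp :: real
  assumes h: "\<forall>X Y Z. X\<ge>0 \<longrightarrow> Y\<ge>0 \<longrightarrow> Z\<ge>0 \<longrightarrow> 0 \<le> f X Y Z \<and> f X Y Z \<le> X*Y*Z^2"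
      and fe: "\<forall>X Y Z. f X Y Z = pa*X^2*Y*Z + pb*X*Y^2*Z + pp*X*Y*Z^2"
  shows "pa=0 \<and> pb=0"
proof -
  have a: "0 \<le> e*(pa+pb) + e^2*pp" and b: "0 \<le> e*(-(pa+pb)) + e^2*(1-pp)"
    and c: "0 \<le> e*(4*pa+2*pb) + e^2*(2*pp)" and d: "0 \<le> e*(-(4*pa+2*pb)) + e^2*(2-2*pp)"
    if "0 < e" for e
  proof -
    have "0 \<le> f 1 1 e \<and> f 1 1 e \<le> 1*1*e^2" "0 \<le> f 2 1 e \<and> f 2 1 e \<le> 2*1*e^2"
      using h[rule_format, of 1 1 e] h[rule_format, of 2 1 e] that by auto
    then show "0 \<le> e*(pa+pb) + e^2*pp" "0 \<le> e*(-(pa+pb)) + e^2*(1-pp)"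
      "0 \<le> e*(4*pa+2*pb) + e^2*(2*pp)" "0 \<le> e*(-(4*pa+2*pb)) + e^2*(2-2*pp)"
      unfolding fe[rule_format] by (simp_all add: algebra_simps power2_eq_square)
  qed
  have "0 \<le> pa+pb" "0 \<le> -(pa+pb)" "0 \<le> 4*pa+2*pb" "0 \<le> -(4*pa+2*pb)"
    by (rule L1, erule a, rule L1, erule b, rule L1, erule c, rule L1, erule d)
  then show ?thesis by linarith
qed

lemma final5:
  fixes a b c d e :: real
  assumes h: "\<forall>X Y Z W. X\<ge>0 \<longrightarrow> Y\<ge>0 \<longrightarrow> Z\<ge>0 \<longrightarrow> W\<ge>0 \<longrightarrow> 0 \<le> f X Y Z W \<and> f X Y Z W \<le> Op X Y Z W"
      and fe: "\<forall>X Y Z W. f X Y Z W = a*X^2*Z*W + b*Y^2*X*W + c*Z^2*X*Y + d*W^2*Y*Z + e*X*Y*Z*W"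
  shows "b = a \<and> c = a \<and> d = a \<and> e = -4*a \<and> 0 \<le> a \<and> a \<le> 1"
proof -
  have s: "a+b+c+d+e = 0" using h[rule_format, of 1 1 1 1] by (simp add: fe Op_def)
  have r: "0 \<le> a" "a \<le> 1" using h[rule_format, of 1 0 1 1] by (simp_all add: fe Op_def)
  have q: "0 \<le> t*(2*a+b+c+e) + t^2*a" "0 \<le> t*(-(2*a+b+c+e)) + t^2*a"
     "0 \<le> t*(2*b+c+d+e) + t^2*b" "0 \<le> t*(-(2*b+c+d+e)) + t^2*b"
     "0 \<le> t*(a+2*c+d+e) + t^2*c" "0 \<le> t*(-(a+2*c+d+e)) + t^2*c"
     "0 \<le> t*(a+b+2*d+e) + t^2*d" "0 \<le> t*(-(a+b+2*d+e)) + t^2*d"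
    if t: "0 < t" "t < 1" for t
  proof -
    have "0 \<le> f (1+t) 1 1 1" "0 \<le> f (1-t) 1 1 1" "0 \<le> f 1 (1+t) 1 1" "0 \<le> f 1 (1-t) 1 1"
      "0 \<le> f 1 1 (1+t) 1" "0 \<le> f 1 1 (1-t) 1" "0 \<le> f 1 1 1 (1+t)" "0 \<le> f 1 1 1 (1-t)"
      using h t by auto
    then show "0 \<le> t*(2*a+b+c+e) + t^2*a" "0 \<le> t*(-(2*a+b+c+e)) + t^2*a"
     "0 \<le> t*(2*b+c+d+e) + t^2*b" "0 \<le> t*(-(2*b+c+d+e)) + t^2*b"
     "0 \<le> t*(a+2*c+d+e) + t^2*c" "0 \<le> t*(-(a+2*c+d+e)) + t^2*c"
     "0 \<le> t*(a+b+2*d+e) + t^2*d" "0 \<le> t*(-(a+b+2*d+e)) + t^2*d"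
      unfolding fe[rule_format] using s by (simp_all add: algebra_simps power2_eq_square)
  qed
  have "0 \<le> 2*a+b+c+e" "0 \<le> -(2*a+b+c+e)" "0 \<le> 2*b+c+d+e" "0 \<le> -(2*b+c+d+e)"
    "0 \<le> a+2*c+d+e" "0 \<le> -(a+2*c+d+e)" "0 \<le> a+b+2*d+e" "0 \<le> -(a+b+2*d+e)"
    by (rule L1, erule (1) q)+
  then show ?thesis using s r by linarith
qed



theorem lemma2:
  fixes c :: "nat \<times> nat \<times> nat \<times> nat \<Rightarrow> real"
  assumes "\<And>x y z w. 0 \<le> form_eval 8 c x y z w"
      and "\<And>x y z w. form_eval 8 c x y z w \<le> O41 x y z w"
  shows "(\<forall>x y z w.
            c (4,0,2,2) * x^4*z^2*w^2 + c (2,4,0,2) * y^4*x^2*w^2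
          + c (2,2,4,0) * z^4*x^2*y^2 + c (0,2,2,4) * w^4*y^2*z^2
          + c (2,2,2,2) * x^2*y^2*z^2*w^2
          = c (4,0,2,2) * O41 x y z w)
         \<and> 0 \<le> c (4,0,2,2) \<and> c (4,0,2,2) \<le> 1"
proof -
  have Gb: "\<forall>X Y Z W. X\<ge>0 \<longrightarrow> Y\<ge>0 \<longrightarrow> Z\<ge>0 \<longrightarrow> W\<ge>0 \<longrightarrow> 0 \<le> Gf c X Y Z W \<and> Gf c X Y Z W \<le> Op X Y Z W"
    using Gbounds[OF assms] by blast
  have "c (8,0,0,0) = 0 \<and> c (6,2,0,0) = 0 \<and> c (4,4,0,0) = 0 \<and> c (2,6,0,0) = 0 \<and> c (0,8,0,0) = 0"
  proof (rule quart2[where f="\<lambda>X Y. Gf c X Y 0 0"])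
    show "\<forall>X Y. X\<ge>0 \<longrightarrow> Y\<ge>0 \<longrightarrow> Gf c X Y 0 0 = 0"
      using Gb by (force simp: Op_def)
    show "\<forall>X Y. Gf c X Y 0 0 = c (8,0,0,0)*X^4 + c (6,2,0,0)*X^3*Y + c (4,4,0,0)*X^2*Y^2 + c (2,6,0,0)*X*Y^3 + c (0,8,0,0)*Y^4"
      by (simp add: Gf_exp algebra_simps)
  qed
  then have z0_0: "c (8,0,0,0) = 0" and z0_1: "c (6,2,0,0) = 0" and z0_2: "c (4,4,0,0) = 0" and z0_3: "c (2,6,0,0) = 0" and z0_4: "c (0,8,0,0) = 0" by auto
  have "c (8,0,0,0) = 0 \<and> c (6,0,2,0) = 0 \<and> c (4,0,4,0) = 0 \<and> c (2,0,6,0) = 0 \<and> c (0,0,8,0) = 0"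
  proof (rule quart2[where f="\<lambda>X Y. Gf c X 0 Y 0"])
    show "\<forall>X Y. X\<ge>0 \<longrightarrow> Y\<ge>0 \<longrightarrow> Gf c X 0 Y 0 = 0"
      using Gb by (force simp: Op_def)
    show "\<forall>X Y. Gf c X 0 Y 0 = c (8,0,0,0)*X^4 + c (6,0,2,0)*X^3*Y + c (4,0,4,0)*X^2*Y^2 + c (2,0,6,0)*X*Y^3 + c (0,0,8,0)*Y^4"
      by (simp add: Gf_exp algebra_simps)
  qed
  then have z1_0: "c (8,0,0,0) = 0" and z1_1: "c (6,0,2,0) = 0" and z1_2: "c (4,0,4,0) = 0" and z1_3: "c (2,0,6,0) = 0" and z1_4: "c (0,0,8,0) = 0" by auto
  have "c (8,0,0,0) = 0 \<and> c (6,0,0,2) = 0 \<and> c (4,0,0,4) = 0 \<and> c (2,0,0,6) = 0 \<and> c (0,0,0,8) = 0"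
  proof (rule quart2[where f="\<lambda>X Y. Gf c X 0 0 Y"])
    show "\<forall>X Y. X\<ge>0 \<longrightarrow> Y\<ge>0 \<longrightarrow> Gf c X 0 0 Y = 0"
      using Gb by (force simp: Op_def)
    show "\<forall>X Y. Gf c X 0 0 Y = c (8,0,0,0)*X^4 + c (6,0,0,2)*X^3*Y + c (4,0,0,4)*X^2*Y^2 + c (2,0,0,6)*X*Y^3 + c (0,0,0,8)*Y^4"
      by (simp add: Gf_exp algebra_simps)
  qed
  then have z2_0: "c (8,0,0,0) = 0" and z2_1: "c (6,0,0,2) = 0" and z2_2: "c (4,0,0,4) = 0" and z2_3: "c (2,0,0,6) = 0" and z2_4: "c (0,0,0,8) = 0" by auto
  have "c (0,8,0,0) = 0 \<and> c (0,6,2,0) = 0 \<and> c (0,4,4,0) = 0 \<and> c (0,2,6,0) = 0 \<and> c (0,0,8,0) = 0"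
  proof (rule quart2[where f="\<lambda>X Y. Gf c 0 X Y 0"])
    show "\<forall>X Y. X\<ge>0 \<longrightarrow> Y\<ge>0 \<longrightarrow> Gf c 0 X Y 0 = 0"
      using Gb by (force simp: Op_def)
    show "\<forall>X Y. Gf c 0 X Y 0 = c (0,8,0,0)*X^4 + c (0,6,2,0)*X^3*Y + c (0,4,4,0)*X^2*Y^2 + c (0,2,6,0)*X*Y^3 + c (0,0,8,0)*Y^4"
      by (simp add: Gf_exp algebra_simps)
  qed
  then have z3_0: "c (0,8,0,0) = 0" and z3_1: "c (0,6,2,0) = 0" and z3_2: "c (0,4,4,0) = 0" and z3_3: "c (0,2,6,0) = 0" and z3_4: "c (0,0,8,0) = 0" by auto
  have "c (0,8,0,0) = 0 \<and> c (0,6,0,2) = 0 \<and> c (0,4,0,4) = 0 \<and> c (0,2,0,6) = 0 \<and> c (0,0,0,8) = 0"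
  proof (rule quart2[where f="\<lambda>X Y. Gf c 0 X 0 Y"])
    show "\<forall>X Y. X\<ge>0 \<longrightarrow> Y\<ge>0 \<longrightarrow> Gf c 0 X 0 Y = 0"
      using Gb by (force simp: Op_def)
    show "\<forall>X Y. Gf c 0 X 0 Y = c (0,8,0,0)*X^4 + c (0,6,0,2)*X^3*Y + c (0,4,0,4)*X^2*Y^2 + c (0,2,0,6)*X*Y^3 + c (0,0,0,8)*Y^4"
      by (simp add: Gf_exp algebra_simps)
  qed
  then have z4_0: "c (0,8,0,0) = 0" and z4_1: "c (0,6,0,2) = 0" and z4_2: "c (0,4,0,4) = 0" and z4_3: "c (0,2,0,6) = 0" and z4_4: "c (0,0,0,8) = 0" by auto
  have "c (0,0,8,0) = 0 \<and> c (0,0,6,2) = 0 \<and> c (0,0,4,4) = 0 \<and> c (0,0,2,6) = 0 \<and> c (0,0,0,8) = 0"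
  proof (rule quart2[where f="\<lambda>X Y. Gf c 0 0 X Y"])
    show "\<forall>X Y. X\<ge>0 \<longrightarrow> Y\<ge>0 \<longrightarrow> Gf c 0 0 X Y = 0"
      using Gb by (force simp: Op_def)
    show "\<forall>X Y. Gf c 0 0 X Y = c (0,0,8,0)*X^4 + c (0,0,6,2)*X^3*Y + c (0,0,4,4)*X^2*Y^2 + c (0,0,2,6)*X*Y^3 + c (0,0,0,8)*Y^4"
      by (simp add: Gf_exp algebra_simps)
  qed
  then have z5_0: "c (0,0,8,0) = 0" and z5_1: "c (0,0,6,2) = 0" and z5_2: "c (0,0,4,4) = 0" and z5_3: "c (0,0,2,6) = 0" and z5_4: "c (0,0,0,8) = 0" by auto
  have "c (4,2,2,0) = 0 \<and> c (2,4,2,0) = 0"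
  proof (rule tri[where f="\<lambda>X Y Z. Gf c X Y Z 0" and pp="c (2,2,4,0)"])
    have "Op X Y Z 0 = X*Y*Z^2" for X Y Z by (simp add: Op_def mult_ac)
    then show "\<forall>X Y Z. X\<ge>0 \<longrightarrow> Y\<ge>0 \<longrightarrow> Z\<ge>0 \<longrightarrow> 0 \<le> Gf c X Y Z 0 \<and> Gf c X Y Z 0 \<le> X*Y*Z^2"
      using Gb by (metis order_refl)
    show "\<forall>X Y Z. Gf c X Y Z 0 = c (4,2,2,0)*X^2*Y*Z + c (2,4,2,0)*X*Y^2*Z + c (2,2,4,0)*X*Y*Z^2"
      by (simp add: Gf_exp z0_0 z0_1 z0_2 z0_3 z0_4 z1_0 z1_1 z1_2 z1_3 z1_4 z2_0 z2_1 z2_2 z2_3 z2_4 z3_0 z3_1 z3_2 z3_3 z3_4 z4_0 z4_1 z4_2 z4_3 z4_4 z5_0 z5_1 z5_2 z5_3 z5_4 algebra_simps power2_eq_square power3_eq_cube)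
  qed
  then have w0a: "c (4,2,2,0) = 0" and w0b: "c (2,4,2,0) = 0" by auto
  have "c (0,4,2,2) = 0 \<and> c (0,2,4,2) = 0"
  proof (rule tri[where f="\<lambda>X Y Z. Gf c 0 X Y Z" and pp="c (0,2,2,4)"])
    have "Op 0 X Y Z = X*Y*Z^2" for X Y Z by (simp add: Op_def mult_ac)
    then show "\<forall>X Y Z. X\<ge>0 \<longrightarrow> Y\<ge>0 \<longrightarrow> Z\<ge>0 \<longrightarrow> 0 \<le> Gf c 0 X Y Z \<and> Gf c 0 X Y Z \<le> X*Y*Z^2"
      using Gb by (metis order_refl)
    show "\<forall>X Y Z. Gf c 0 X Y Z = c (0,4,2,2)*X^2*Y*Z + c (0,2,4,2)*X*Y^2*Z + c (0,2,2,4)*X*Y*Z^2"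
      by (simp add: Gf_exp z0_0 z0_1 z0_2 z0_3 z0_4 z1_0 z1_1 z1_2 z1_3 z1_4 z2_0 z2_1 z2_2 z2_3 z2_4 z3_0 z3_1 z3_2 z3_3 z3_4 z4_0 z4_1 z4_2 z4_3 z4_4 z5_0 z5_1 z5_2 z5_3 z5_4 algebra_simps power2_eq_square power3_eq_cube)
  qed
  then have w1a: "c (0,4,2,2) = 0" and w1b: "c (0,2,4,2) = 0" by auto
  have "c (2,0,4,2) = 0 \<and> c (2,0,2,4) = 0"
  proof (rule tri[where f="\<lambda>X Y Z. Gf c Z 0 X Y" and pp="c (4,0,2,2)"])
    have "Op Z 0 X Y = X*Y*Z^2" for X Y Z by (simp add: Op_def mult_ac)
    then show "\<forall>X Y Z. X\<ge>0 \<longrightarrow> Y\<ge>0 \<longrightarrow> Z\<ge>0 \<longrightarrow> 0 \<le> Gf c Z 0 X Y \<and> Gf c Z 0 X Y \<le> X*Y*Z^2"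
      using Gb by (metis order_refl)
    show "\<forall>X Y Z. Gf c Z 0 X Y = c (2,0,4,2)*X^2*Y*Z + c (2,0,2,4)*X*Y^2*Z + c (4,0,2,2)*X*Y*Z^2"
      by (simp add: Gf_exp z0_0 z0_1 z0_2 z0_3 z0_4 z1_0 z1_1 z1_2 z1_3 z1_4 z2_0 z2_1 z2_2 z2_3 z2_4 z3_0 z3_1 z3_2 z3_3 z3_4 z4_0 z4_1 z4_2 z4_3 z4_4 z5_0 z5_1 z5_2 z5_3 z5_4 algebra_simps power2_eq_square power3_eq_cube)
  qed
  then have w2a: "c (2,0,4,2) = 0" and w2b: "c (2,0,2,4) = 0" by auto
  have "c (2,2,0,4) = 0 \<and> c (4,2,0,2) = 0"
  proof (rule tri[where f="\<lambda>X Y Z. Gf c Y Z 0 X" and pp="c (2,4,0,2)"])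
    have "Op Y Z 0 X = X*Y*Z^2" for X Y Z by (simp add: Op_def mult_ac)
    then show "\<forall>X Y Z. X\<ge>0 \<longrightarrow> Y\<ge>0 \<longrightarrow> Z\<ge>0 \<longrightarrow> 0 \<le> Gf c Y Z 0 X \<and> Gf c Y Z 0 X \<le> X*Y*Z^2"
      using Gb by (metis order_refl)
    show "\<forall>X Y Z. Gf c Y Z 0 X = c (2,2,0,4)*X^2*Y*Z + c (4,2,0,2)*X*Y^2*Z + c (2,4,0,2)*X*Y*Z^2"
      by (simp add: Gf_exp z0_0 z0_1 z0_2 z0_3 z0_4 z1_0 z1_1 z1_2 z1_3 z1_4 z2_0 z2_1 z2_2 z2_3 z2_4 z3_0 z3_1 z3_2 z3_3 z3_4 z4_0 z4_1 z4_2 z4_3 z4_4 z5_0 z5_1 z5_2 z5_3 z5_4 algebra_simps power2_eq_square power3_eq_cube)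
  qed
  then have w3a: "c (2,2,0,4) = 0" and w3b: "c (4,2,0,2) = 0" by auto
  have fin: "c (2,4,0,2) = c (4,0,2,2) \<and> c (2,2,4,0) = c (4,0,2,2) \<and> c (0,2,2,4) = c (4,0,2,2)
      \<and> c (2,2,2,2) = -4 * c (4,0,2,2) \<and> 0 \<le> c (4,0,2,2) \<and> c (4,0,2,2) \<le> 1"
  proof (rule final5[where f="Gf c"])
    show "\<forall>X Y Z W. X\<ge>0 \<longrightarrow> Y\<ge>0 \<longrightarrow> Z\<ge>0 \<longrightarrow> W\<ge>0 \<longrightarrow> 0 \<le> Gf c X Y Z W \<and> Gf c X Y Z W \<le> Op X Y Z W"
      by (rule Gb)
    show "\<forall>X Y Z W. Gf c X Y Z W = c (4,0,2,2)*X^2*Z*W + c (2,4,0,2)*Y^2*X*W + c (2,2,4,0)*Z^2*X*Y + c (0,2,2,4)*W^2*Y*Z + c (2,2,2,2)*X*Y*Z*W"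
      by (simp add: Gf_exp z0_0 z0_1 z0_2 z0_3 z0_4 z1_0 z1_1 z1_2 z1_3 z1_4 z2_0 z2_1 z2_2 z2_3 z2_4 z3_0 z3_1 z3_2 z3_3 z3_4 z4_0 z4_1 z4_2 z4_3 z4_4 z5_0 z5_1 z5_2 z5_3 z5_4 w0a w0b w1a w1b w2a w2b w3a w3b algebra_simps power2_eq_square power3_eq_cube)
  qed
  then show ?thesis by (auto simp: O41_def algebra_simps)
qed

end
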